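(* Let $\mathfrak{X}$ be a Bourgain–Delbaen space determined by $(\Gamma_q,i_q)_q$ and let $\Gamma'$ be a self-determined subset of $\Gamma$. Write $\{q:\Gamma'\cap\Delta_q\neq\varnothing\}=\{q_0<q_1<q_2<\cdots\}$, $\Gamma'_{q}=\Gamma'\cap\Gamma_q$, let $R:\ell_\infty(\Gamma)\to\ell_\infty(\Gamma')$ be restriction onto $\Gamma'$, $r'_{q_s}:\ell_\infty(\Gamma_{q_s})\to\ell_\infty(\Gamma'_{q_s})$ the restriction onto $\Gamma'_{q_s}$, and $i'_{q_s}:\ell_\infty(\Gamma'_{q_s})\to\ell_\infty(\Gamma')$, $i'_{q_s}(x)=R(i_{q_s}(x))$, where $x$ is identified with a vector of $\ell_\infty(\Gamma_{q_s})$ vanishing off $\Gamma'_{q_s}$. Then for every $s$ and every $x\in\ell_\infty(\Gamma_{q_s})$, $R(i_{q_s}(x))=i'_{q_s}(r'_{q_s}(x))$.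
   Context: Bourgain–Delbaen spaces: $(\Gamma_q)_{q\geqslant1}$ is a strictly increasing sequence of non-empty finite sets, $\Gamma=\bigcup_q\Gamma_q$, and $i_q:\ell_\infty(\Gamma_q)\to\ell_\infty(\Gamma)$ are linear extension operators ($i_q(x)|_{\Gamma_q}=x$) with $\sup_q\|i_q\|<\infty$, which are compatible: for $p<q$, $i_p=i_q\circ r_q\circ i_p$, with $r_q$ restriction to $\Gamma_q$. Set $\Delta_1=\Gamma_1$, $\Delta_{q+1}=\Gamma_{q+1}\setminus\Gamma_q$, and for $\gamma\in\Delta_q$ let $d_\gamma=i_q(e_\gamma)$; $\mathfrak{X}$ is the closed span of $\{d_\gamma\}$ in $\ell_\infty(\Gamma)$. For $\gamma\in\Gamma$, $e_\gamma^*$ is evaluation at $\gamma$ restricted to $\mathfrak{X}$ and $(d_\gamma^* )$ are the functionals biorthogonal to $(d_\gamma)$. An infinite subset $\Gamma'\subseteq\Gamma$ is self-determined if each $d_\gamma^*$, $\gamma\in\Gamma'$, lies in the linear span of $\{e_\eta^*:\eta\in\Gamma'\}$. *)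

theory Defs
  imports "HOL-Analysis.Analysis" "HOL-Library.Infinite_Set"
begin

definition linf :: "'a set \<Rightarrow> ('a \<Rightarrow> real) set" where
  "linf S = {x. (\<forall>g. g \<notin> S \<longrightarrow> x g = 0) \<and> bounded (range x)}"

definition supnorm :: "('a \<Rightarrow> real) \<Rightarrow> real" where
  "supnorm x = (SUP g. \<bar>x g\<bar>)"

definition restr :: "'a set \<Rightarrow> ('a \<Rightarrow> real) \<Rightarrow> ('a \<Rightarrow> real)" where
  "restr S x = (\<lambda>g. if g \<in> S then x g else 0)"

definition GammaU :: "(nat \<Rightarrow> 'a set) \<Rightarrow> 'a set" where
  "GammaU Gam = (\<Union>q\<in>{1..}. Gam q)"

definition BD_data :: "(nat \<Rightarrow> 'a set) \<Rightarrow> (nat \<Rightarrow> ('a \<Rightarrow> real) \<Rightarrow> ('a \<Rightarrow> real)) \<Rightarrow> bool" where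
  "BD_data Gam i \<longleftrightarrow>
     (\<forall>q\<ge>1. finite (Gam q) \<and> Gam q \<noteq> {} \<and> Gam q \<subset> Gam (Suc q)) \<and>
     (\<forall>q\<ge>1. \<forall>x\<in>linf (Gam q). i q x \<in> linf (GammaU Gam)) \<and>
     (\<forall>q\<ge>1. \<forall>x\<in>linf (Gam q). \<forall>y\<in>linf (Gam q). \<forall>a b::real.
         i q (\<lambda>g. a * x g + b * y g) = (\<lambda>g. a * i q x g + b * i q y g)) \<and>
     (\<forall>q\<ge>1. \<forall>x\<in>linf (Gam q). \<forall>g\<in>Gam q. i q x g = x g) \<and>
     (\<exists>C. \<forall>q\<ge>1. \<forall>x\<in>linf (Gam q). supnorm (i q x) \<le> C * supnorm x) \<and>
     (\<forall>p q. 1 \<le> p \<longrightarrow> p < q \<longrightarrow> (\<forall>x\<in>linf (Gam p). i p x = i q (restr (Gam q) (i p x))))"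

definition Delta :: "(nat \<Rightarrow> 'a set) \<Rightarrow> nat \<Rightarrow> 'a set" where
  "Delta Gam q = (if q = 1 then Gam 1 else if q \<ge> 2 then Gam q - Gam (q - 1) else {})"

definition unitv :: "'a \<Rightarrow> ('a \<Rightarrow> real)" where
  "unitv g = (\<lambda>h. if h = g then 1 else 0)"

definition dvec :: "(nat \<Rightarrow> 'a set) \<Rightarrow> (nat \<Rightarrow> ('a \<Rightarrow> real) \<Rightarrow> ('a \<Rightarrow> real)) \<Rightarrow> 'a \<Rightarrow> ('a \<Rightarrow> real)" where
  "dvec Gam i g = i (THE q. q \<ge> 1 \<and> g \<in> Delta Gam q) (unitv g)"

definition BDspace :: "(nat \<Rightarrow> 'a set) \<Rightarrow> (nat \<Rightarrow> ('a \<Rightarrow> real) \<Rightarrow> ('a \<Rightarrow> real)) \<Rightarrow> ('a \<Rightarrow> real) set" where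
  "BDspace Gam i = {x \<in> linf (GammaU Gam). \<forall>e>0. \<exists>F c. finite F \<and> F \<subseteq> GammaU Gam \<and>
       supnorm (\<lambda>h. x h - (\<Sum>g\<in>F. c g * dvec Gam i g h)) \<le> e}"

definition is_dstar :: "(nat \<Rightarrow> 'a set) \<Rightarrow> (nat \<Rightarrow> ('a \<Rightarrow> real) \<Rightarrow> ('a \<Rightarrow> real)) \<Rightarrow> 'a \<Rightarrow> (('a \<Rightarrow> real) \<Rightarrow> real) \<Rightarrow> bool" where
  "is_dstar Gam i g f \<longleftrightarrow>
     (\<forall>x\<in>BDspace Gam i. \<forall>y\<in>BDspace Gam i. \<forall>a b::real.
         f (\<lambda>h. a * x h + b * y h) = a * f x + b * f y) \<and>
     (\<exists>K. \<forall>x\<in>BDspace Gam i. \<bar>f x\<bar> \<le> K * supnorm x) \<and>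
     (\<forall>h\<in>GammaU Gam. f (dvec Gam i h) = (if h = g then 1 else 0))"

definition self_determined :: "(nat \<Rightarrow> 'a set) \<Rightarrow> (nat \<Rightarrow> ('a \<Rightarrow> real) \<Rightarrow> ('a \<Rightarrow> real)) \<Rightarrow> 'a set \<Rightarrow> bool" where
  "self_determined Gam i G' \<longleftrightarrow> G' \<subseteq> GammaU Gam \<and> infinite G' \<and>
     (\<forall>g\<in>G'. \<exists>f. is_dstar Gam i g f \<and>
        (\<exists>F c. finite F \<and> F \<subseteq> G' \<and> (\<forall>x\<in>BDspace Gam i. f x = (\<Sum>h\<in>F. c h * x h))))"

end

theory Submission
  imports Defs
begin

lemma linf_lin:
  assumes "x \<in> linf S" "y \<in> linf S"
  shows "(\<lambda>g. a * x g + b * y g) \<in> linf S"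
proof -
  from assms obtain B1 B2 where B1: "\<forall>g. \<bar>x g\<bar> \<le> B1" and B2: "\<forall>g. \<bar>y g\<bar> \<le> B2"
    unfolding linf_def bounded_iff by auto
  have "\<bar>a * x g + b * y g\<bar> \<le> \<bar>a\<bar> * B1 + \<bar>b\<bar> * B2" for g
  proof -
    have "\<bar>a * x g + b * y g\<bar> \<le> \<bar>a\<bar> * \<bar>x g\<bar> + \<bar>b\<bar> * \<bar>y g\<bar>"
      by (metis abs_mult abs_triangle_ineq)
    also have "\<dots> \<le> \<bar>a\<bar> * B1 + \<bar>b\<bar> * B2"
      using B1 B2 by (intro add_mono mult_left_mono) auto
    finally show ?thesis .
  qed
  then show ?thesis using assms unfolding linf_def bounded_iff by auto
qed

lemma linf_zero: "(\<lambda>g. 0) \<in> linf S"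
  unfolding linf_def by auto

lemma linf_mono: "A \<subseteq> B \<Longrightarrow> x \<in> linf A \<Longrightarrow> x \<in> linf B"
  unfolding linf_def by auto

lemma linf_restr_fin: "finite T \<Longrightarrow> restr T x \<in> linf T"
proof -
  assume T: "finite T"
  have "range (restr T x) \<subseteq> insert 0 (x ` T)" unfolding restr_def by auto
  moreover have "bounded (insert 0 (x ` T))" using T by (intro finite_imp_bounded) auto
  ultimately have "bounded (range (restr T x))" using bounded_subset by blast
  then show ?thesis unfolding linf_def restr_def by auto
qed

lemma linf_unitv: "g \<in> S \<Longrightarrow> unitv g \<in> linf S"
proof -
  assume g: "g \<in> S"
  have "range (unitv g) \<subseteq> {0, 1}" unfolding unitv_def by auto
  moreover have "bounded ({0, 1}::real set)" by (rule finite_imp_bounded) simp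
  ultimately have "bounded (range (unitv g))" by (rule bounded_subset[rotated])
  moreover have "\<forall>h. h \<notin> S \<longrightarrow> unitv g h = 0" using g unfolding unitv_def by auto
  ultimately show ?thesis unfolding linf_def by blast
qed

lemma decomp:
  assumes "finite S" "\<forall>g. g \<notin> S \<longrightarrow> u g = 0"
  shows "u = (\<lambda>g. \<Sum>\<eta>\<in>S. u \<eta> * unitv \<eta> g)"
proof
  fix g
  have "(\<Sum>\<eta>\<in>S. u \<eta> * unitv \<eta> g) = (\<Sum>\<eta>\<in>S. if g = \<eta> then u \<eta> else 0)"
    unfolding unitv_def by (intro sum.cong) auto
  also have "\<dots> = (if g \<in> S then u g else 0)" using assms(1) by simp
  finally show "u g = (\<Sum>\<eta>\<in>S. u \<eta> * unitv \<eta> g)" using assms(2) by auto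
qed

lemma sum_closed:
  fixes V :: "('a \<Rightarrow> real) set" and v :: "'b \<Rightarrow> 'a \<Rightarrow> real"
  assumes cl: "\<And>x y a b. x \<in> V \<Longrightarrow> y \<in> V \<Longrightarrow> (\<lambda>g. a * x g + b * y g) \<in> V"
    and z: "(\<lambda>g. 0) \<in> V" and fin: "finite S" and v: "\<And>s. s \<in> S \<Longrightarrow> v s \<in> V"
  shows "(\<lambda>g. \<Sum>s\<in>S. c s * v s g) \<in> V"
  using fin v
proof (induction S rule: finite_induct)
  case empty then show ?case using z by simp
next
  case (insert s S)
  then have "(\<lambda>g. c s * v s g + 1 * (\<Sum>s\<in>S. c s * v s g)) \<in> V"
    by (intro cl) auto
  then show ?case using insert by simp
qed

lemma lin_sum_fun:
  fixes V :: "('a \<Rightarrow> real) set" and v :: "'b \<Rightarrow> 'a \<Rightarrow> real" and L :: "('a \<Rightarrow> real) \<Rightarrow> ('c \<Rightarrow> real)"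
  assumes lin: "\<And>x y a b. x \<in> V \<Longrightarrow> y \<in> V \<Longrightarrow> L (\<lambda>g. a * x g + b * y g) = (\<lambda>g. a * L x g + b * L y g)"
    and cl: "\<And>x y a b. x \<in> V \<Longrightarrow> y \<in> V \<Longrightarrow> (\<lambda>g. a * x g + b * y g) \<in> V"
    and z: "(\<lambda>g. 0) \<in> V" and fin: "finite S" and v: "\<And>s. s \<in> S \<Longrightarrow> v s \<in> V"
  shows "L (\<lambda>g. \<Sum>s\<in>S. c s * v s g) = (\<lambda>g. \<Sum>s\<in>S. c s * L (v s) g)"
  using fin v
proof (induction S rule: finite_induct)
  case empty
  have "L (\<lambda>g. 0 * (\<lambda>g. 0) g + 0 * (\<lambda>g. 0) g) = (\<lambda>g. 0 * L (\<lambda>g. 0) g + 0 * L (\<lambda>g. 0) g)"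
    using lin z by blast
  then show ?case by simp
next
  case (insert s S)
  have m: "(\<lambda>g. \<Sum>s\<in>S. c s * v s g) \<in> V" using sum_closed[OF cl z] insert by blast
  have "L (\<lambda>g. c s * v s g + 1 * (\<Sum>s\<in>S. c s * v s g)) =
        (\<lambda>g. c s * L (v s) g + 1 * L (\<lambda>g. \<Sum>s\<in>S. c s * v s g) g)"
    using lin m insert by blast
  then show ?case using insert by simp
qed

lemma lin_sum_real:
  fixes V :: "('a \<Rightarrow> real) set" and v :: "'b \<Rightarrow> 'a \<Rightarrow> real" and L :: "('a \<Rightarrow> real) \<Rightarrow> real"
  assumes lin: "\<And>x y a b. x \<in> V \<Longrightarrow> y \<in> V \<Longrightarrow> L (\<lambda>g. a * x g + b * y g) = a * L x + b * L y"
    and cl: "\<And>x y a b. x \<in> V \<Longrightarrow> y \<in> V \<Longrightarrow> (\<lambda>g. a * x g + b * y g) \<in> V"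
    and z: "(\<lambda>g. 0) \<in> V" and fin: "finite S" and v: "\<And>s. s \<in> S \<Longrightarrow> v s \<in> V"
  shows "L (\<lambda>g. \<Sum>s\<in>S. c s * v s g) = (\<Sum>s\<in>S. c s * L (v s))"
  using fin v
proof (induction S rule: finite_induct)
  case empty
  have "L (\<lambda>g. 0 * (\<lambda>g. 0) g + 0 * (\<lambda>g. 0) g) = 0 * L (\<lambda>g. 0) + 0 * L (\<lambda>g. 0)"
    using lin z by blast
  then show ?case by simp
next
  case (insert s S)
  have m: "(\<lambda>g. \<Sum>s\<in>S. c s * v s g) \<in> V" using sum_closed[OF cl z] insert by blast
  have "L (\<lambda>g. c s * v s g + 1 * (\<Sum>s\<in>S. c s * v s g)) =
        c s * L (v s) + 1 * L (\<lambda>g. \<Sum>s\<in>S. c s * v s g)"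
    using lin m insert by blast
  then show ?case using insert by simp
qed

locale BD =
  fixes Gam :: "nat \<Rightarrow> 'a set" and i :: "nat \<Rightarrow> ('a \<Rightarrow> real) \<Rightarrow> ('a \<Rightarrow> real)"
  assumes bd: "BD_data Gam i"
begin

lemma bdc: "(\<forall>q\<ge>1. finite (Gam q) \<and> Gam q \<noteq> {} \<and> Gam q \<subset> Gam (Suc q))"
  "(\<forall>q\<ge>1. \<forall>x\<in>linf (Gam q). i q x \<in> linf (GammaU Gam))"
  "(\<forall>q\<ge>1. \<forall>x\<in>linf (Gam q). \<forall>y\<in>linf (Gam q). \<forall>a b::real.
         i q (\<lambda>g. a * x g + b * y g) = (\<lambda>g. a * i q x g + b * i q y g))"
  "(\<forall>q\<ge>1. \<forall>x\<in>linf (Gam q). \<forall>g\<in>Gam q. i q x g = x g)"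
  "(\<forall>p q. 1 \<le> p \<longrightarrow> p < q \<longrightarrow> (\<forall>x\<in>linf (Gam p). i p x = i q (restr (Gam q) (i p x))))"
  using bd[unfolded BD_data_def] apply -
  apply (elim conjE, assumption)+
  done

lemma fin: "q \<ge> 1 \<Longrightarrow> finite (Gam q)" using bdc(1) by simp
lemma psub: "q \<ge> 1 \<Longrightarrow> Gam q \<subset> Gam (Suc q)" using bdc(1) by simp
lemma ilin: "q \<ge> 1 \<Longrightarrow> x \<in> linf (Gam q) \<Longrightarrow> y \<in> linf (Gam q) \<Longrightarrow>
   i q (\<lambda>g. a * x g + b * y g) = (\<lambda>g. a * i q x g + b * i q y g)"
  using bdc(3) by simp
lemma iext: "q \<ge> 1 \<Longrightarrow> x \<in> linf (Gam q) \<Longrightarrow> g \<in> Gam q \<Longrightarrow> i q x g = x g"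
  using bdc(4) by simp
lemma icomp: "1 \<le> p \<Longrightarrow> p < q \<Longrightarrow> x \<in> linf (Gam p) \<Longrightarrow> i p x = i q (restr (Gam q) (i p x))"
  using bdc(5) by simp
lemma imap: "q \<ge> 1 \<Longrightarrow> x \<in> linf (Gam q) \<Longrightarrow> i q x \<in> linf (GammaU Gam)"
  using bdc(2) by simp

lemma mono: assumes "1 \<le> p" "p \<le> q" shows "Gam p \<subseteq> Gam q"
  using assms(2)
proof (induction rule: dec_induct)
  case base then show ?case by simp
next
  case (step n) then show ?case using psub[of n] assms(1) by auto
qed

lemma Delta_sub: "Delta Gam r \<subseteq> Gam r" unfolding Delta_def by auto
lemma Delta_r1: "\<eta> \<in> Delta Gam r \<Longrightarrow> r \<ge> 1" unfolding Delta_def by (auto split: if_splits)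
lemma Delta_notin: assumes "\<eta> \<in> Delta Gam r" "1 \<le> k" "k < r" shows "\<eta> \<notin> Gam k"
proof -
  have "r \<ge> 2" using assms by auto
  then have "\<eta> \<notin> Gam (r - 1)" using assms(1) unfolding Delta_def by auto
  moreover have "Gam k \<subseteq> Gam (r - 1)" using mono assms by auto
  ultimately show ?thesis by auto
qed
lemma Delta_uniq: assumes "\<eta> \<in> Delta Gam r" "\<eta> \<in> Delta Gam s" shows "r = s"
proof -
  have r1: "r \<ge> 1" by (rule Delta_r1[OF assms(1)])
  have s1: "s \<ge> 1" by (rule Delta_r1[OF assms(2)])
  have er: "\<eta> \<in> Gam r" using assms(1) Delta_sub by blast
  have es: "\<eta> \<in> Gam s" using assms(2) Delta_sub by blast
  have "\<not> r < s"
  proof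
    assume "r < s"
    then have "\<eta> \<notin> Gam r" by (rule Delta_notin[OF assms(2) r1])
    then show False using er by contradiction
  qed
  moreover have "\<not> s < r"
  proof
    assume "s < r"
    then have "\<eta> \<notin> Gam s" by (rule Delta_notin[OF assms(1) s1])
    then show False using es by contradiction
  qed
  ultimately show ?thesis by linarith
qed
lemma dvec_eq: assumes "\<eta> \<in> Delta Gam r" shows "dvec Gam i \<eta> = i r (unitv \<eta>)"
proof -
  have "(THE q. q \<ge> 1 \<and> \<eta> \<in> Delta Gam q) = r"
  proof (rule the_equality)
    show "r \<ge> 1 \<and> \<eta> \<in> Delta Gam r" using assms Delta_r1[OF assms] by simp
  next
    fix q assume "q \<ge> 1 \<and> \<eta> \<in> Delta Gam q"
    then show "q = r" using Delta_uniq[of \<eta> q r] assms by simp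
  qed
  then show ?thesis unfolding dvec_def by simp
qed
lemma GammaU_iff: "\<eta> \<in> GammaU Gam \<longleftrightarrow> (\<exists>q\<ge>1. \<eta> \<in> Gam q)"
  unfolding GammaU_def by auto
lemma Delta_ex: assumes "\<eta> \<in> GammaU Gam" shows "\<exists>r. \<eta> \<in> Delta Gam r"
proof -
  have "\<eta> \<in> Gam (Suc q) \<longrightarrow> (\<exists>r. \<eta> \<in> Delta Gam r)" for q
  proof (induction q)
    case 0 then show ?case by (auto simp: Delta_def)
  next
    case (Suc q)
    show ?case
    proof
      assume h: "\<eta> \<in> Gam (Suc (Suc q))"
      show "\<exists>r. \<eta> \<in> Delta Gam r"
      proof (cases "\<eta> \<in> Gam (Suc q)")
        case True then show ?thesis using Suc by blast
      next
        case False
        then have "\<eta> \<in> Delta Gam (Suc (Suc q))" using h unfolding Delta_def by auto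
        then show ?thesis by blast
      qed
    qed
  qed
  moreover obtain q where q: "q \<ge> 1" "\<eta> \<in> Gam q" using assms unfolding GammaU_iff by blast
  moreover have "Suc (q - 1) = q" using q by simp
  ultimately show ?thesis by metis
qed

lemma fin_sub: assumes "finite F" "F \<subseteq> GammaU Gam" shows "\<exists>N\<ge>1. F \<subseteq> Gam N"
  using assms
proof (induction F rule: finite_induct)
  case empty then show ?case by auto
next
  case (insert x F)
  then obtain N where N: "N \<ge> 1" "F \<subseteq> Gam N" by auto
  obtain q where q: "q \<ge> 1" "x \<in> Gam q" using insert GammaU_iff by auto
  have "Gam N \<subseteq> Gam (max N q)" "Gam q \<subseteq> Gam (max N q)" using mono N q by auto
  then show ?case using N q by (intro exI[of _ "max N q"]) auto
qed

lemma restr_i_self: "q \<ge> 1 \<Longrightarrow> x \<in> linf (Gam q) \<Longrightarrow> restr (Gam q) (i q x) = x"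
  unfolding restr_def using iext by (auto simp: linf_def)

lemma i_zero: assumes "q \<ge> 1" shows "i q (\<lambda>h. 0) = (\<lambda>h. 0)"
proof -
  have "i q (\<lambda>g. 0 * (\<lambda>h. 0) g + 0 * (\<lambda>h. 0) g) = (\<lambda>g. 0 * i q (\<lambda>h. 0) g + 0 * i q (\<lambda>h. 0) g)"
    using ilin[OF assms] linf_zero by blast
  then show ?thesis by simp
qed

lemma i_decomp: assumes "q \<ge> 1" "u \<in> linf (Gam q)"
  shows "i q u = (\<lambda>g. \<Sum>\<eta>\<in>Gam q. u \<eta> * i q (unitv \<eta>) g)"
proof -
  have e: "u = (\<lambda>g. \<Sum>\<eta>\<in>Gam q. u \<eta> * unitv \<eta> g)"
    using decomp fin[OF assms(1)] assms(2) unfolding linf_def by blast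
  have "i q u = i q (\<lambda>g. \<Sum>\<eta>\<in>Gam q. u \<eta> * unitv \<eta> g)" using e by (rule arg_cong)
  also have "\<dots> = (\<lambda>g. \<Sum>\<eta>\<in>Gam q. u \<eta> * i q (unitv \<eta>) g)"
    by (rule lin_sum_fun[where V="linf (Gam q)"])
       (use ilin[OF assms(1)] linf_lin linf_zero fin[OF assms(1)] linf_unitv in auto)
  finally show ?thesis by simp
qed


lemma expand: "\<forall>u\<in>linf (Gam (Suc n)). \<exists>b. i (Suc n) u = (\<lambda>h. \<Sum>\<eta>\<in>Gam (Suc n). b \<eta> * dvec Gam i \<eta> h)"
proof (induction n)
  case 0
  show ?case
  proof
    fix u assume u: "u \<in> linf (Gam (Suc 0))"
    have "i (Suc 0) u = (\<lambda>g. \<Sum>\<eta>\<in>Gam (Suc 0). u \<eta> * i (Suc 0) (unitv \<eta>) g)"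
      using i_decomp u by auto
    also have "\<dots> = (\<lambda>g. \<Sum>\<eta>\<in>Gam (Suc 0). u \<eta> * dvec Gam i \<eta> g)"
    proof -
      have "\<eta> \<in> Gam (Suc 0) \<Longrightarrow> dvec Gam i \<eta> = i (Suc 0) (unitv \<eta>)" for \<eta>
        by (rule dvec_eq) (simp add: Delta_def)
      then show ?thesis by (intro ext sum.cong) auto
    qed
    finally show "\<exists>b. i (Suc 0) u = (\<lambda>h. \<Sum>\<eta>\<in>Gam (Suc 0). b \<eta> * dvec Gam i \<eta> h)" by blast
  qed
next
  case (Suc n)
  define q where "q = Suc n"
  have q1: "q \<ge> 1" unfolding q_def by simp
  have q'1: "Suc q \<ge> 1" by simp
  show ?case unfolding q_def[symmetric]
  proof
    fix u assume u: "u \<in> linf (Gam (Suc q))"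
    define v where "v = restr (Gam q) u"
    have v: "v \<in> linf (Gam q)" unfolding v_def using linf_restr_fin fin[OF q1] by blast
    obtain b where b: "i q v = (\<lambda>h. \<Sum>\<eta>\<in>Gam q. b \<eta> * dvec Gam i \<eta> h)"
      using Suc v unfolding q_def by blast
    define w where "w = restr (Gam (Suc q)) (i q v)"
    have w: "w \<in> linf (Gam (Suc q))" unfolding w_def using linf_restr_fin fin[OF q'1] by blast
    have iw: "i (Suc q) w = i q v" unfolding w_def using icomp[OF q1 _ v] by simp
    define z where "z = (\<lambda>g. 1 * u g + (-1) * w g)"
    have z: "z \<in> linf (Gam (Suc q))" unfolding z_def using linf_lin u w by blast
    have ueq: "u = (\<lambda>g. 1 * w g + 1 * z g)" unfolding z_def by auto
    have iu: "i (Suc q) u = (\<lambda>g. 1 * i (Suc q) w g + 1 * i (Suc q) z g)"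
      by (subst ueq) (rule ilin[OF q'1 w z])
    have zq: "z \<eta> = 0" if "\<eta> \<in> Gam q" for \<eta>
    proof -
      have "\<eta> \<in> Gam (Suc q)" using that psub[OF q1] by auto
      then have "w \<eta> = i q v \<eta>" unfolding w_def restr_def by simp
      also have "\<dots> = v \<eta>" using iext[OF q1 v that] .
      also have "\<dots> = u \<eta>" unfolding v_def restr_def using that by simp
      finally show ?thesis unfolding z_def by simp
    qed
    have iz: "i (Suc q) z = (\<lambda>g. \<Sum>\<eta>\<in>Gam (Suc q). z \<eta> * dvec Gam i \<eta> g)"
    proof -
      have "i (Suc q) z = (\<lambda>g. \<Sum>\<eta>\<in>Gam (Suc q). z \<eta> * i (Suc q) (unitv \<eta>) g)"
        using i_decomp[OF q'1 z] .
      also have "\<dots> = (\<lambda>g. \<Sum>\<eta>\<in>Gam (Suc q). z \<eta> * dvec Gam i \<eta> g)"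
      proof (intro ext sum.cong refl)
        fix g \<eta> assume e: "\<eta> \<in> Gam (Suc q)"
        show "z \<eta> * i (Suc q) (unitv \<eta>) g = z \<eta> * dvec Gam i \<eta> g"
        proof (cases "\<eta> \<in> Gam q")
          case True then show ?thesis using zq by simp
        next
          case False
          then have "\<eta> \<in> Delta Gam (Suc q)" using e q1 unfolding Delta_def by auto
          then show ?thesis using dvec_eq by simp
        qed
      qed
      finally show ?thesis .
    qed
    define b' where "b' = (\<lambda>\<eta>. (if \<eta> \<in> Gam q then b \<eta> else 0) + z \<eta>)"
    have "i (Suc q) u = (\<lambda>h. \<Sum>\<eta>\<in>Gam (Suc q). b' \<eta> * dvec Gam i \<eta> h)"
    proof
      fix h
      have sub: "Gam (Suc q) \<inter> Gam q = Gam q" using psub[OF q1] by auto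
      have "(\<Sum>\<eta>\<in>Gam (Suc q). b' \<eta> * dvec Gam i \<eta> h) =
            (\<Sum>\<eta>\<in>Gam (Suc q). if \<eta> \<in> Gam q then b \<eta> * dvec Gam i \<eta> h else 0) +
            (\<Sum>\<eta>\<in>Gam (Suc q). z \<eta> * dvec Gam i \<eta> h)"
        by (subst sum.distrib[symmetric]) (rule sum.cong, auto simp: b'_def distrib_right)
      also have "(\<Sum>\<eta>\<in>Gam (Suc q). if \<eta> \<in> Gam q then b \<eta> * dvec Gam i \<eta> h else 0) =
                 (\<Sum>\<eta>\<in>Gam q. b \<eta> * dvec Gam i \<eta> h)"
        using sum.inter_restrict[OF fin[OF q'1], of "\<lambda>\<eta>. b \<eta> * dvec Gam i \<eta> h" "Gam q"] sub
        by simp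
      finally show "i (Suc q) u h = (\<Sum>\<eta>\<in>Gam (Suc q). b' \<eta> * dvec Gam i \<eta> h)"
        using iu iw b iz by simp
    qed
    then show "\<exists>b. i (Suc q) u = (\<lambda>h. \<Sum>\<eta>\<in>Gam (Suc q). b \<eta> * dvec Gam i \<eta> h)" by blast
  qed
qed

lemma expand': "N \<ge> 1 \<Longrightarrow> u \<in> linf (Gam N) \<Longrightarrow> \<exists>b. i N u = (\<lambda>h. \<Sum>\<eta>\<in>Gam N. b \<eta> * dvec Gam i \<eta> h)"
proof -
  assume N: "N \<ge> 1" and u: "u \<in> linf (Gam N)"
  have e: "Suc (N - 1) = N" using N by simp
  show ?thesis using expand[of "N - 1"] u unfolding e by blast
qed

definition VN :: "nat \<Rightarrow> ('a \<Rightarrow> real) set" where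
  "VN N = {y. \<exists>b. y = (\<lambda>h. \<Sum>\<eta>\<in>Gam N. b \<eta> * dvec Gam i \<eta> h)}"

lemma dvec_linf: assumes "\<eta> \<in> GammaU Gam" shows "dvec Gam i \<eta> \<in> linf (GammaU Gam)"
proof -
  obtain r where r: "\<eta> \<in> Delta Gam r" using Delta_ex[OF assms] by blast
  have "unitv \<eta> \<in> linf (Gam r)" by (rule linf_unitv[OF subsetD[OF Delta_sub r]])
  then have "i r (unitv \<eta>) \<in> linf (GammaU Gam)" by (rule imap[OF Delta_r1[OF r]])
  then show ?thesis unfolding dvec_eq[OF r] .
qed

lemma VN_cl: "x \<in> VN N \<Longrightarrow> y \<in> VN N \<Longrightarrow> (\<lambda>g. a * x g + b * y g) \<in> VN N"
proof -
  assume "x \<in> VN N" "y \<in> VN N"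
  then obtain b1 b2 where x: "x = (\<lambda>h. \<Sum>\<eta>\<in>Gam N. b1 \<eta> * dvec Gam i \<eta> h)"
    and y: "y = (\<lambda>h. \<Sum>\<eta>\<in>Gam N. b2 \<eta> * dvec Gam i \<eta> h)" unfolding VN_def by auto
  have "(\<lambda>g. a * x g + b * y g) = (\<lambda>h. \<Sum>\<eta>\<in>Gam N. (a * b1 \<eta> + b * b2 \<eta>) * dvec Gam i \<eta> h)"
    unfolding x y by (simp add: sum_distrib_left sum.distrib algebra_simps)
  then show ?thesis unfolding VN_def mem_Collect_eq
    by (rule exI[where x="\<lambda>\<eta>. a * b1 \<eta> + b * b2 \<eta>"])
qed

lemma VN_zero: "(\<lambda>g. 0) \<in> VN N"
  unfolding VN_def by (intro CollectI exI[of _ "\<lambda>_. 0"]) simp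

lemma VN_dvec: "\<eta> \<in> Gam N \<Longrightarrow> finite (Gam N) \<Longrightarrow> dvec Gam i \<eta> \<in> VN N"
proof -
  assume e: "\<eta> \<in> Gam N" and f: "finite (Gam N)"
  have "dvec Gam i \<eta> = (\<lambda>h. \<Sum>k\<in>Gam N. (if k = \<eta> then 1 else 0) * dvec Gam i k h)"
  proof
    fix h
    have "(\<Sum>k\<in>Gam N. (if k = \<eta> then 1 else 0) * dvec Gam i k h) =
          (\<Sum>k\<in>Gam N. if \<eta> = k then dvec Gam i k h else 0)" by (rule sum.cong) auto
    also have "\<dots> = dvec Gam i \<eta> h" using e f by simp
    finally show "dvec Gam i \<eta> h = (\<Sum>k\<in>Gam N. (if k = \<eta> then 1 else 0) * dvec Gam i k h)" by simp
  qed
  then show ?thesis unfolding VN_def mem_Collect_eq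
    by (rule exI[where x="\<lambda>k. if k = \<eta> then 1 else 0"])
qed

lemma VN_BD: assumes N: "N \<ge> 1" and y: "y \<in> VN N" shows "y \<in> BDspace Gam i"
proof -
  obtain b where b: "y = (\<lambda>h. \<Sum>\<eta>\<in>Gam N. b \<eta> * dvec Gam i \<eta> h)" using y unfolding VN_def by auto
  have sub: "Gam N \<subseteq> GammaU Gam" using N unfolding GammaU_def by auto
  have "y \<in> linf (GammaU Gam)" unfolding b
    by (rule sum_closed) (use linf_lin linf_zero fin[OF N] sub dvec_linf in auto)
  moreover have "supnorm (\<lambda>h. y h - (\<Sum>\<eta>\<in>Gam N. b \<eta> * dvec Gam i \<eta> h)) \<le> e" if "e > 0" for e
    using that unfolding b supnorm_def by simp
  ultimately show ?thesis unfolding BDspace_def using fin[OF N] sub by blast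
qed

definition gfun :: "nat \<Rightarrow> 'a \<Rightarrow> ('a \<Rightarrow> real) \<Rightarrow> real" where
  "gfun P \<gamma> y = y \<gamma> - i P (restr (Gam P) y) \<gamma>"

lemma gfun_lin: assumes "P \<ge> 1"
  shows "gfun P \<gamma> (\<lambda>g. a * x g + b * y g) = a * gfun P \<gamma> x + b * gfun P \<gamma> y"
proof -
  have r: "restr (Gam P) (\<lambda>g. a * x g + b * y g) = (\<lambda>g. a * restr (Gam P) x g + b * restr (Gam P) y g)"
    unfolding restr_def by auto
  have "i P (restr (Gam P) (\<lambda>g. a * x g + b * y g)) =
        (\<lambda>g. a * i P (restr (Gam P) x) g + b * i P (restr (Gam P) y) g)"
    unfolding r using ilin[OF assms] linf_restr_fin fin[OF assms] by blast
  then show ?thesis unfolding gfun_def by (simp add: algebra_simps)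
qed

lemma gfun_dvec:
  assumes P: "P \<ge> 1" and g: "\<gamma> \<in> Delta Gam (Suc P)" and e: "\<eta> \<in> GammaU Gam"
  shows "gfun P \<gamma> (dvec Gam i \<eta>) = (if \<eta> = \<gamma> then 1 else 0)"
proof -
  obtain r where r: "\<eta> \<in> Delta Gam r" using Delta_ex[OF e] by blast
  have r1: "r \<ge> 1" using Delta_r1[OF r] .
  have u: "unitv \<eta> \<in> linf (Gam r)" by (rule linf_unitv[OF subsetD[OF Delta_sub r]])
  have d: "dvec Gam i \<eta> = i r (unitv \<eta>)" using dvec_eq[OF r] .
  have gP: "\<gamma> \<notin> Gam P" using Delta_notin[OF g P] by simp
  have gS: "\<gamma> \<in> Gam (Suc P)" by (rule subsetD[OF Delta_sub g])
  consider "r \<le> P" | "r = Suc P" | "r > Suc P" by linarith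
  then show ?thesis
  proof cases
    case 1
    have "i r (unitv \<eta>) = i P (restr (Gam P) (i r (unitv \<eta>)))"
    proof (cases "r = P")
      case True then show ?thesis using restr_i_self[OF r1 u] by simp
    next
      case False then show ?thesis using icomp[OF r1 _ u, of P] 1 by simp
    qed
    moreover have "\<eta> \<in> Gam P" by (rule subsetD[OF mono[OF r1 1] subsetD[OF Delta_sub r]])
    then have "\<eta> \<noteq> \<gamma>" using gP by auto
    ultimately show ?thesis unfolding gfun_def d by simp
  next
    case 2
    have "restr (Gam P) (i r (unitv \<eta>)) = (\<lambda>h. 0)"
    proof
      fix h
      show "restr (Gam P) (i r (unitv \<eta>)) h = 0"
      proof (cases "h \<in> Gam P")
        case True
        then have "h \<in> Gam r" using mono[OF P, of r] 2 by auto
        then have "i r (unitv \<eta>) h = unitv \<eta> h" using iext[OF r1 u] by simp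
        moreover have "\<eta> \<notin> Gam P" using Delta_notin[OF r P] 2 by simp
        ultimately show ?thesis using True unfolding restr_def unitv_def by auto
      qed (simp add: restr_def)
    qed
    moreover have "i r (unitv \<eta>) \<gamma> = unitv \<eta> \<gamma>" using iext[OF r1 u] gS 2 by simp
    ultimately show ?thesis unfolding gfun_def d using i_zero[OF P] by (simp add: unitv_def)
  next
    case 3
    have nS: "\<eta> \<notin> Gam (Suc P)" using Delta_notin[OF r _ 3] by simp
    have "restr (Gam P) (i r (unitv \<eta>)) = (\<lambda>h. 0)"
    proof
      fix h
      show "restr (Gam P) (i r (unitv \<eta>)) h = 0"
      proof (cases "h \<in> Gam P")
        case True
        then have "h \<in> Gam r" using mono[OF P, of r] 3 by auto
        then have "i r (unitv \<eta>) h = unitv \<eta> h" using iext[OF r1 u] by simp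
        moreover have "h \<in> Gam (Suc P)" using True psub[OF P] by auto
        ultimately show ?thesis using True nS unfolding restr_def unitv_def by auto
      qed (simp add: restr_def)
    qed
    moreover have "\<gamma> \<in> Gam r" using gS mono[of "Suc P" r] 3 by auto
    then have "i r (unitv \<eta>) \<gamma> = unitv \<eta> \<gamma>" using iext[OF r1 u] by simp
    moreover have "\<eta> \<noteq> \<gamma>" using nS gS by blast
    ultimately show ?thesis unfolding gfun_def d using i_zero[OF P] by (simp add: unitv_def)
  qed
qed

lemma coef:
  assumes sd: "self_determined Gam i G'" and P: "P \<ge> 1" and gG: "\<gamma> \<in> G'"
    and g: "\<gamma> \<in> Delta Gam (Suc P)" and z: "\<zeta> \<in> Gam P" and zG: "\<zeta> \<notin> G'"
  shows "i P (unitv \<zeta>) \<gamma> = 0"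
proof -
  obtain f F c where fd: "is_dstar Gam i \<gamma> f" and F: "finite F" "F \<subseteq> G'"
    and fF: "\<forall>x\<in>BDspace Gam i. f x = (\<Sum>h\<in>F. c h * x h)"
    using sd gG unfolding self_determined_def by blast
  have G'U: "G' \<subseteq> GammaU Gam" using sd unfolding self_determined_def by blast
  obtain N0 where N0: "N0 \<ge> 1" "F \<subseteq> Gam N0" using fin_sub F G'U by blast
  define N where "N = max N0 (Suc P)"
  have N: "N \<ge> 1" "F \<subseteq> Gam N" "Suc P \<le> N" using N0 mono[of N0 N] unfolding N_def by auto
  have PN: "Gam P \<subseteq> Gam N" using mono P N by auto
  have gN: "\<gamma> \<in> Gam N" using subsetD[OF mono[of "Suc P" N] subsetD[OF Delta_sub g]] N by simp
  have gP: "\<gamma> \<notin> Gam P" using Delta_notin[OF g P] by simp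
  have u: "unitv \<zeta> \<in> linf (Gam N)" by (rule linf_unitv[OF subsetD[OF PN z]])
  define w where "w = i N (unitv \<zeta>)"
  obtain b where b: "w = (\<lambda>h. \<Sum>\<eta>\<in>Gam N. b \<eta> * dvec Gam i \<eta> h)"
    using expand'[OF N(1) u] unfolding w_def by blast
  have wV: "w \<in> VN N" using b unfolding VN_def by blast
  have wB: "w \<in> BDspace Gam i" using VN_BD[OF N(1) wV] .
  have flin: "\<And>x y a b. x \<in> VN N \<Longrightarrow> y \<in> VN N \<Longrightarrow> f (\<lambda>g. a * x g + b * y g) = a * f x + b * f y"
    using fd VN_BD[OF N(1)] unfolding is_dstar_def by blast
  have subU: "Gam N \<subseteq> GammaU Gam" using N(1) unfolding GammaU_def by (auto intro!: bexI[of _ N])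
  have fdv: "\<eta> \<in> Gam N \<Longrightarrow> f (dvec Gam i \<eta>) = gfun P \<gamma> (dvec Gam i \<eta>)" for \<eta>
    using fd gfun_dvec[OF P g] subU unfolding is_dstar_def by auto
  have "f w = (\<Sum>\<eta>\<in>Gam N. b \<eta> * f (dvec Gam i \<eta>))" unfolding b
    by (rule lin_sum_real[where V="VN N"]) (use flin VN_cl VN_zero fin[OF N(1)] VN_dvec in auto)
  also have "\<dots> = (\<Sum>\<eta>\<in>Gam N. b \<eta> * gfun P \<gamma> (dvec Gam i \<eta>))" using fdv by simp
  also have "\<dots> = gfun P \<gamma> w" unfolding b
    by (rule lin_sum_real[where V=UNIV, symmetric]) (use gfun_lin[OF P] fin[OF N(1)] in auto)
  finally have fg: "f w = gfun P \<gamma> w" .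
  have wh: "h \<in> Gam N \<Longrightarrow> w h = unitv \<zeta> h" for h unfolding w_def using iext[OF N(1) u] by simp
  have "f w = (\<Sum>h\<in>F. c h * w h)" using fF wB by blast
  also have "\<dots> = (\<Sum>h\<in>F. c h * unitv \<zeta> h)" using wh N(2) by (intro sum.cong) auto
  also have "\<dots> = 0" using zG F(2) unfolding unitv_def by (intro sum.neutral) auto
  finally have f0: "f w = 0" .
  have rw: "restr (Gam P) w = unitv \<zeta>"
  proof
    fix h show "restr (Gam P) w h = unitv \<zeta> h"
      using wh PN z unfolding restr_def unitv_def by auto
  qed
  have "w \<gamma> = 0" using wh[OF gN] gP z unfolding unitv_def by auto
  then have "gfun P \<gamma> w = - i P (unitv \<zeta>) \<gamma>" unfolding gfun_def rw by simp
  then show ?thesis using fg f0 by simp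
qed

lemma key:
  assumes sd: "self_determined Gam i G'" and q: "q \<ge> 1" and z: "z \<in> linf (Gam q)"
    and z0: "\<forall>g\<in>G'. z g = 0"
  shows "\<forall>\<gamma>\<in>G'. i q z \<gamma> = 0"
proof -
  have "\<forall>\<gamma>\<in>G' \<inter> Gam (q + n). i q z \<gamma> = 0" for n
  proof (induction n)
    case 0 then show ?case using iext[OF q z] z0 by simp
  next
    case (Suc n)
    define P where "P = q + n"
    have P: "P \<ge> 1" "q \<le> P" using q unfolding P_def by auto
    show ?case
    proof
      fix \<gamma> assume gm: "\<gamma> \<in> G' \<inter> Gam (q + Suc n)"
      show "i q z \<gamma> = 0"
      proof (cases "\<gamma> \<in> Gam P")
        case True then show ?thesis using Suc gm unfolding P_def by blast
      next
        case False
        have g: "\<gamma> \<in> Delta Gam (Suc P)" using gm False P unfolding Delta_def P_def by auto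
        define y where "y = i q z"
        have ry: "restr (Gam P) y \<in> linf (Gam P)" using linf_restr_fin fin[OF P(1)] by blast
        have y: "y = i P (restr (Gam P) y)"
        proof (cases "q = P")
          case True then show ?thesis using restr_i_self[OF q z] unfolding y_def by simp
        next
          case False then show ?thesis using icomp[OF q _ z, of P] P unfolding y_def by simp
        qed
        also have "\<dots> = (\<lambda>g. \<Sum>\<zeta>\<in>Gam P. restr (Gam P) y \<zeta> * i P (unitv \<zeta>) g)"
          using i_decomp[OF P(1) ry] .
        finally have yy: "y = (\<lambda>g. \<Sum>\<zeta>\<in>Gam P. restr (Gam P) y \<zeta> * i P (unitv \<zeta>) g)" .
        have "y \<gamma> = (\<Sum>\<zeta>\<in>Gam P. restr (Gam P) y \<zeta> * i P (unitv \<zeta>) \<gamma>)"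
          using fun_cong[OF yy, of \<gamma>] by (simp only:)
        also have "\<dots> = 0"
        proof (intro sum.neutral ballI)
          fix \<zeta> assume zP: "\<zeta> \<in> Gam P"
          show "restr (Gam P) y \<zeta> * i P (unitv \<zeta>) \<gamma> = 0"
          proof (cases "\<zeta> \<in> G'")
            case True
            then have "y \<zeta> = 0" using Suc zP unfolding y_def P_def by blast
            then show ?thesis using zP unfolding restr_def by simp
          next
            case False
            then show ?thesis using coef[OF sd P(1) _ g zP] gm by simp
          qed
        qed
        finally show ?thesis unfolding y_def .
      qed
    qed
  qed
  moreover have "G' \<subseteq> GammaU Gam" using sd unfolding self_determined_def by blast
  ultimately show ?thesis
  proof (intro ballI)
    fix \<gamma> assume "\<gamma> \<in> G'"
    moreover obtain k where k: "k \<ge> 1" "\<gamma> \<in> Gam k"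
      using \<open>\<gamma> \<in> G'\<close> \<open>G' \<subseteq> GammaU Gam\<close> GammaU_iff by blast
    moreover have "Gam k \<subseteq> Gam (q + k)" using mono k by auto
    ultimately show "i q z \<gamma> = 0" using \<open>\<And>n. \<forall>\<gamma>\<in>G' \<inter> Gam (q + n). i q z \<gamma> = 0\<close> by blast
  qed
qed

end

theorem lemma1p8:
  fixes Gam :: "nat \<Rightarrow> 'a set"
    and i :: "nat \<Rightarrow> ('a \<Rightarrow> real) \<Rightarrow> ('a \<Rightarrow> real)"
    and G' :: "'a set"
  assumes "BD_data Gam i"
    and "self_determined Gam i G'"
  shows "\<forall>s x. let q = Infinite_Set.enumerate {q. q \<ge> 1 \<and> G' \<inter> Delta Gam q \<noteq> {}} s in
           x \<in> linf (Gam q) \<longrightarrow>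
           restr G' (i q x) = restr G' (i q (restr (G' \<inter> Gam q) x))"
proof (intro allI)
  fix s x
  interpret BD Gam i using assms(1) by (unfold_locales)
  define S where "S = {q. q \<ge> 1 \<and> G' \<inter> Delta Gam q \<noteq> {}}"
  have G'U: "G' \<subseteq> GammaU Gam" using assms(2) unfolding self_determined_def by blast
  have infS: "infinite S"
  proof
    assume fS: "finite S"
    have "G' \<subseteq> (\<Union>r\<in>S. Delta Gam r)"
    proof
      fix \<gamma> assume "\<gamma> \<in> G'"
      moreover obtain r where r: "\<gamma> \<in> Delta Gam r" using Delta_ex[OF subsetD[OF G'U \<open>\<gamma> \<in> G'\<close>]] by blast
      moreover have "r \<ge> 1" by (rule Delta_r1[OF r])
      ultimately have "r \<in> S" unfolding S_def by auto
      then show "\<gamma> \<in> (\<Union>r\<in>S. Delta Gam r)" using r by auto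
    qed
    moreover have "finite (\<Union>r\<in>S. Delta Gam r)"
    proof (rule finite_UN_I[OF fS])
      fix r assume "r \<in> S"
      then have "r \<ge> 1" unfolding S_def by auto
      then show "finite (Delta Gam r)" by (rule finite_subset[OF Delta_sub fin])
    qed
    ultimately have "finite G'" using finite_subset by blast
    then show False using assms(2) unfolding self_determined_def by blast
  qed
  define q where "q = Infinite_Set.enumerate S s"
  have q: "q \<ge> 1" using enumerate_in_set[OF infS, of s] unfolding q_def S_def by blast
  have "x \<in> linf (Gam q) \<longrightarrow> restr G' (i q x) = restr G' (i q (restr (G' \<inter> Gam q) x))"
  proof
    assume x: "x \<in> linf (Gam q)"
    define xr where "xr = restr (G' \<inter> Gam q) x"
    have xr: "xr \<in> linf (Gam q)" unfolding xr_def
      by (rule linf_mono[OF _ linf_restr_fin]) (use fin[OF q] in auto)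
    define z where "z = (\<lambda>g. 1 * x g + (-1) * xr g)"
    have z: "z \<in> linf (Gam q)" unfolding z_def using linf_lin x xr by blast
    have z0: "\<forall>g\<in>G'. z g = 0"
      using x unfolding z_def xr_def restr_def linf_def by auto
    have xe: "x = (\<lambda>g. 1 * xr g + 1 * z g)" unfolding z_def by auto
    have ix: "i q x = (\<lambda>g. 1 * i q xr g + 1 * i q z g)"
      by (subst xe) (rule ilin[OF q xr z])
    have "\<forall>\<gamma>\<in>G'. i q z \<gamma> = 0" using key[OF assms(2) q z z0] .
    then show "restr G' (i q x) = restr G' (i q xr)"
      unfolding ix restr_def by auto
  qed
  then show "let q = Infinite_Set.enumerate {q. q \<ge> 1 \<and> G' \<inter> Delta Gam q \<noteq> {}} s in
           x \<in> linf (Gam q) \<longrightarrow>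
           restr G' (i q x) = restr G' (i q (restr (G' \<inter> Gam q) x))"
    unfolding Let_def q_def S_def by simp
qed

end
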